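(* Let $d>1$. For every integer $s$ with $2\le s\le 2^d$, \[\lambda^*(d,s)\le \left(\frac{s}{s-1}\right)^{s-1}\lambda^*(d,s-1)\le e\,\lambda^*(d,s-1),\] and for every integer $s$ with $0\le s\le 2^d-2$, \[\lambda^*(d,s)\le \left(\frac{2^d-s}{2^d-s-1}\right)^{2^d-s-1}\lambda^*(d,s+1)\le e\,\lambda^*(d,s+1).\]
   Context: For integers $n\ge d\ge 1$, a $d$-flat in $\mathbb{F}_2^n$ is a set $x_0+U$ with $x_0\in\mathbb{F}_2^n$ and $U$ a $d$-dimensional linear subspace of $\mathbb{F}_2^n$. For $A\subseteq\mathbb{F}_2^n$ and an integer $0\le s\le 2^d$, $\lambda^*(n,d,s,A)$ denotes the fraction of $d$-flats $Q$ in $\mathbb{F}_2^n$ with $|Q\cap A|=s$. Let $\lambda^*(n,d,s)=\max_{A\subseteq\mathbb{F}_2^n}\lambda^*(n,d,s,A)$; this is non-increasing in $n$, and $\lambda^*(d,s)=\lim_{n\to\infty}\lambda^*(n,d,s)$. *)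

theory Defs
  imports Complex_Main
begin

text \<open>Vectors of F_2^n: functions nat => bool vanishing outside {0..<n};
  addition is pointwise exclusive or.\<close>

definition F2vec :: "nat \<Rightarrow> (nat \<Rightarrow> bool) set" where
  "F2vec n = {x. \<forall>i\<ge>n. \<not> x i}"

definition vadd :: "(nat \<Rightarrow> bool) \<Rightarrow> (nat \<Rightarrow> bool) \<Rightarrow> (nat \<Rightarrow> bool)" where
  "vadd x y = (\<lambda>i. x i \<noteq> y i)"

definition vsum :: "(nat \<Rightarrow> bool) set \<Rightarrow> (nat \<Rightarrow> bool)" where
  "vsum S = (\<lambda>i. odd (card {x\<in>S. x i}))"

text \<open>U is a d-dimensional linear subspace of F_2^n: it has a basis B of d
  linearly independent vectors (over F_2, a linear combination is the sum of a subset)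
  and U is the span of B.\<close>
definition subspace_dim :: "nat \<Rightarrow> nat \<Rightarrow> (nat \<Rightarrow> bool) set \<Rightarrow> bool" where
  "subspace_dim n d U \<longleftrightarrow> (\<exists>B. B \<subseteq> F2vec n \<and> finite B \<and> card B = d \<and>
      (\<forall>S\<subseteq>B. S \<noteq> {} \<longrightarrow> vsum S \<noteq> (\<lambda>_. False)) \<and>
      U = vsum ` Pow B)"

definition flats :: "nat \<Rightarrow> nat \<Rightarrow> (nat \<Rightarrow> bool) set set" where
  "flats n d = {Q. \<exists>x0\<in>F2vec n. \<exists>U. subspace_dim n d U \<and> Q = vadd x0 ` U}"

definition lam_A :: "nat \<Rightarrow> nat \<Rightarrow> nat \<Rightarrow> (nat \<Rightarrow> bool) set \<Rightarrow> real" where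
  "lam_A n d s A = real (card {Q\<in>flats n d. card (Q \<inter> A) = s}) / real (card (flats n d))"

definition lam_n :: "nat \<Rightarrow> nat \<Rightarrow> nat \<Rightarrow> real" where
  "lam_n n d s = Max ((\<lambda>A. lam_A n d s A) ` Pow (F2vec n))"

definition lam :: "nat \<Rightarrow> nat \<Rightarrow> real" where
  "lam d s = lim (\<lambda>n. lam_n n d s)"

end

theory Submission
  imports Defs "HOL-Library.FuncSet"
begin
abbreviation vzero :: "nat \<Rightarrow> bool" where "vzero \<equiv> (\<lambda>_. False)"

definition indep :: "(nat \<Rightarrow> bool) set \<Rightarrow> bool" where
  "indep B \<longleftrightarrow> (\<forall>S\<subseteq>B. S \<noteq> {} \<longrightarrow> vsum S \<noteq> vzero)"

lemma vadd_comm: "vadd x y = vadd y x" unfolding vadd_def by auto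
lemma vadd_assoc: "vadd (vadd x y) z = vadd x (vadd y z)" unfolding vadd_def by auto
lemma vadd_self[simp]: "vadd x x = vzero" unfolding vadd_def by auto
lemma vadd_zero[simp]: "vadd vzero x = x" "vadd x vzero = x" unfolding vadd_def by auto
lemma vadd_cancel[simp]: "vadd x (vadd x y) = y" unfolding vadd_def by auto
lemma vadd_cancel2[simp]: "vadd (vadd y x) x = y" unfolding vadd_def by auto
lemma vadd_eq_zero_iff: "vadd x y = vzero \<longleftrightarrow> x = y" unfolding vadd_def by (auto simp: fun_eq_iff)
lemma vadd_inj: "inj (vadd x)" by (metis injI vadd_cancel)

lemma vsum_empty[simp]: "vsum {} = vzero" unfolding vsum_def by simp

lemma card_symdiff_parity:
  assumes "finite A" "finite B"
  shows "card ((A - B) \<union> (B - A)) + 2 * card (A \<inter> B) = card A + card B"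
proof -
  have "card A = card (A - B) + card (A \<inter> B)"
    using card_Int_Diff[OF assms(1), of B] by simp
  moreover have "card B = card (B - A) + card (A \<inter> B)"
    using card_Int_Diff[OF assms(2), of A] by (simp add: Int_commute)
  moreover have "card ((A - B) \<union> (B - A)) = card (A - B) + card (B - A)"
    using assms by (intro card_Un_disjoint) auto
  ultimately show ?thesis by simp
qed

lemma vsum_symdiff:
  assumes "finite S" "finite T"
  shows "vsum ((S - T) \<union> (T - S)) = vadd (vsum S) (vsum T)"
proof (rule ext)
  fix i
  let ?A = "{x\<in>S. x i}" and ?B = "{x\<in>T. x i}"
  have par: "odd a = (odd b \<noteq> odd c)" if "a + 2 * k = b + c" for a b c k :: nat
  proof -
    have "even (a + 2 * k) = even (b + c)" using that by simp
    then show ?thesis by auto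
  qed
  have eq: "{x\<in>(S - T) \<union> (T - S). x i} = (?A - ?B) \<union> (?B - ?A)" by auto
  have "card ((?A - ?B) \<union> (?B - ?A)) + 2 * card (?A \<inter> ?B) = card ?A + card ?B"
    using assms by (intro card_symdiff_parity) auto
  then have "odd (card ((?A - ?B) \<union> (?B - ?A))) = (odd (card ?A) \<noteq> odd (card ?B))"
    by (rule par)
  then show "vsum ((S - T) \<union> (T - S)) i = vadd (vsum S) (vsum T) i"
    unfolding vsum_def vadd_def eq by simp
qed

lemma vsum_single[simp]: "vsum {x} = x"
proof (rule ext)
  fix i
  have "{y\<in>{x}. y i} = (if x i then {x} else {})" by auto
  then show "vsum {x} i = x i" unfolding vsum_def by simp
qed

lemma vsum_insert:
  assumes "finite S" "x \<notin> S"
  shows "vsum (insert x S) = vadd x (vsum S)"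
proof -
  have "insert x S = ({x} - S) \<union> (S - {x})" using assms by auto
  then have "vsum (insert x S) = vadd (vsum {x}) (vsum S)"
    using vsum_symdiff[of "{x}" S] assms by simp
  then show ?thesis by simp
qed


lemma F2vec_vadd: "x \<in> F2vec n \<Longrightarrow> y \<in> F2vec n \<Longrightarrow> vadd x y \<in> F2vec n"
  unfolding F2vec_def vadd_def by auto

lemma F2vec_zero[simp]: "vzero \<in> F2vec n" unfolding F2vec_def by auto

lemma F2vec_vsum: "S \<subseteq> F2vec n \<Longrightarrow> vsum S \<in> F2vec n"
proof -
  assume a: "S \<subseteq> F2vec n"
  have "\<not> vsum S i" if "i \<ge> n" for i
  proof -
    have "{x\<in>S. x i} = {}" using a that unfolding F2vec_def by auto
    then show ?thesis unfolding vsum_def by (simp only: card.empty) simp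
  qed
  then show ?thesis unfolding F2vec_def by auto
qed

lemma F2vec_mono: "m \<le> n \<Longrightarrow> F2vec m \<subseteq> F2vec n" unfolding F2vec_def by auto

lemma F2vec_bij: "bij_betw (\<lambda>x. {i. x i}) (F2vec n) (Pow {..<n})"
proof (rule bij_betwI[where g = "\<lambda>S i. i \<in> S"])
  show "(\<lambda>x. {i. x i}) \<in> F2vec n \<rightarrow> Pow {..<n}"
  proof
    fix x assume "x \<in> F2vec n"
    then have "\<forall>i. x i \<longrightarrow> i < n" unfolding F2vec_def using not_less by blast
    then show "{i. x i} \<in> Pow {..<n}" by auto
  qed
  show "(\<lambda>S i. i \<in> S) \<in> Pow {..<n} \<rightarrow> F2vec n" unfolding F2vec_def by auto
qed auto

lemma finite_F2vec[simp]: "finite (F2vec n)"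
  using bij_betw_finite[OF F2vec_bij] by simp

lemma card_F2vec: "card (F2vec n) = 2 ^ n"
  using bij_betw_same_card[OF F2vec_bij] by (simp add: card_Pow)

lemma vsum_inj:
  assumes "indep B" "finite B"
  shows "inj_on vsum (Pow B)"
proof (rule inj_onI)
  fix S T assume S: "S \<in> Pow B" and T: "T \<in> Pow B" and eq: "vsum S = vsum T"
  have fin: "finite S" "finite T" using S T assms(2) finite_subset by auto
  have "vsum ((S - T) \<union> (T - S)) = vzero" using vsum_symdiff[OF fin] eq by simp
  moreover have "(S - T) \<union> (T - S) \<subseteq> B" using S T by auto
  ultimately have "(S - T) \<union> (T - S) = {}" using assms(1) unfolding indep_def by blast
  then show "S = T" by auto
qed

lemma card_span:
  assumes "indep B" "finite B"
  shows "card (vsum ` Pow B) = 2 ^ card B"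
  using card_image[OF vsum_inj[OF assms]] card_Pow assms(2) by simp

lemma indep_subset: "indep B \<Longrightarrow> C \<subseteq> B \<Longrightarrow> indep C"
  unfolding indep_def by blast

lemma indep_insert:
  assumes "indep B" "finite B" "v \<notin> vsum ` Pow B"
  shows "indep (insert v B)"
  unfolding indep_def
proof (intro allI impI)
  fix S assume S: "S \<subseteq> insert v B" "S \<noteq> {}"
  show "vsum S \<noteq> vzero"
  proof (cases "v \<in> S")
    case False
    then have "S \<subseteq> B" using S by auto
    then show ?thesis using assms(1) S unfolding indep_def by blast
  next
    case True
    have vB: "v \<notin> B"
    proof
      assume "v \<in> B" then have "{v} \<in> Pow B" by auto
      then have "vsum {v} \<in> vsum ` Pow B" by blast
      then show False using assms(3) by simp
    qed
    let ?S' = "S - {v}"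
    have S'B: "?S' \<subseteq> B" using S by auto
    have fin: "finite ?S'" by (rule finite_subset[OF S'B assms(2)])
    have SS: "S = insert v ?S'" using True by auto
    have "vsum (insert v ?S') = vadd v (vsum ?S')" by (rule vsum_insert[OF fin]) simp
    then have "vsum S = vadd v (vsum ?S')" using SS by simp
    moreover have "vsum ?S' \<noteq> v"
    proof
      assume "vsum ?S' = v"
      moreover have "vsum ?S' \<in> vsum ` Pow B" using S'B by blast
      ultimately show False using assms(3) by simp
    qed
    ultimately show ?thesis by (simp add: vadd_eq_zero_iff)
  qed
qed

lemma span_sub: "B \<subseteq> F2vec m \<Longrightarrow> vsum ` Pow B \<subseteq> F2vec m"
  using F2vec_vsum by blast

lemma extend_indep:
  assumes "B \<subseteq> F2vec m" "finite B" "indep B" "card B \<le> k" "k \<le> m"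
  shows "\<exists>B'. B \<subseteq> B' \<and> B' \<subseteq> F2vec m \<and> finite B' \<and> indep B' \<and> card B' = k"
  using assms
proof (induction "k - card B" arbitrary: B)
  case 0
  then show ?case by (intro exI[of _ B]) auto
next
  case (Suc j)
  have "card (vsum ` Pow B) = 2 ^ card B" using card_span Suc.prems by auto
  also have "\<dots> < 2 ^ m"
  proof (rule power_strict_increasing)
    show "card B < m" using Suc.hyps(2) Suc.prems(5) by linarith
  qed simp
  also have "\<dots> = card (F2vec m)" by (simp add: card_F2vec)
  finally have "card (vsum ` Pow B) < card (F2vec m)" .
  then have "\<not> F2vec m \<subseteq> vsum ` Pow B"
  proof (intro notI)
    assume "F2vec m \<subseteq> vsum ` Pow B"
    then have "card (F2vec m) \<le> card (vsum ` Pow B)"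
      by (intro card_mono) (use Suc.prems(2) in auto)
    then show "card (vsum ` Pow B) < card (F2vec m) \<Longrightarrow> False" by simp
  qed
  then obtain v where v: "v \<in> F2vec m" "v \<notin> vsum ` Pow B" by blast
  have vB: "v \<notin> B"
  proof
    assume "v \<in> B" then have "{v} \<in> Pow B" by auto
    then have "vsum {v} \<in> vsum ` Pow B" by blast
    then show False using v by simp
  qed
  let ?B = "insert v B"
  have i1: "indep ?B" using indep_insert Suc.prems v by auto
  have c1: "card ?B = card B + 1" using vB Suc.prems by simp
  have s1: "?B \<subseteq> F2vec m" using v Suc.prems by auto
  have j1: "j = k - card ?B" using Suc.hyps(2) c1 by simp
  have f1: "finite ?B" using Suc.prems by simp
  have k1: "card ?B \<le> k" using Suc.hyps(2) c1 by simp
  obtain B' where "?B \<subseteq> B' \<and> B' \<subseteq> F2vec m \<and> finite B' \<and> indep B' \<and> card B' = k"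
    using Suc.hyps(1)[OF j1 s1 f1 i1 k1 Suc.prems(5)] by (elim exE)
  then show ?case by (intro exI[of _ B']) auto
qed

lemma flatsE:
  assumes "Q \<in> flats n d"
  obtains x0 B where "x0 \<in> F2vec n" "B \<subseteq> F2vec n" "finite B" "card B = d" "indep B"
    "Q = vadd x0 ` vsum ` Pow B"
  using assms unfolding flats_def subspace_dim_def indep_def by blast

lemma flatsI:
  assumes "x0 \<in> F2vec n" "B \<subseteq> F2vec n" "finite B" "card B = d" "indep B"
  shows "vadd x0 ` vsum ` Pow B \<in> flats n d"
  using assms unfolding flats_def subspace_dim_def indep_def by blast

lemma flats_sub_F: "Q \<in> flats n d \<Longrightarrow> Q \<subseteq> F2vec n"
proof (erule flatsE)
  fix x0 B assume h: "x0 \<in> F2vec n" "B \<subseteq> F2vec n" "Q = vadd x0 ` vsum ` Pow B"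
  show "Q \<subseteq> F2vec n"
  proof
    fix y assume "y \<in> Q"
    then obtain S where S: "S \<subseteq> B" "y = vadd x0 (vsum S)" using h(3) by auto
    have "S \<subseteq> F2vec n" using S(1) h(2) by blast
    then show "y \<in> F2vec n" unfolding S(2) by (rule F2vec_vadd[OF h(1) F2vec_vsum])
  qed
qed

lemma finite_flats: "finite (flats n d)"
proof -
  have "flats n d \<subseteq> Pow (F2vec n)" using flats_sub_F by blast
  then show ?thesis by (rule finite_subset) simp
qed

lemma card_flat: "Q \<in> flats n d \<Longrightarrow> card Q = 2 ^ d"
proof (erule flatsE)
  fix x0 B assume h: "finite B" "card B = d" "indep B" "Q = vadd x0 ` vsum ` Pow B"
  have "card Q = card (vsum ` Pow B)" unfolding h(4)
    by (rule card_image) (rule inj_on_subset[OF vadd_inj], simp)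
  then show ?thesis using card_span h by simp
qed

lemma flats_nonempty: "d \<le> n \<Longrightarrow> flats n d \<noteq> {}"
proof -
  assume "d \<le> n"
  moreover have "indep {}" unfolding indep_def by auto
  ultimately obtain B where "B \<subseteq> F2vec n" "finite B" "indep B" "card B = d"
    using extend_indep[of "{}" n d] by auto
  then have "vadd vzero ` vsum ` Pow B \<in> flats n d" by (intro flatsI) auto
  then show ?thesis by blast
qed

lemma flats_restrict:
  assumes "m \<le> n"
  shows "flats m d = {Q \<in> flats n d. Q \<subseteq> F2vec m}"
proof (rule equalityI)
  show "flats m d \<subseteq> {Q \<in> flats n d. Q \<subseteq> F2vec m}"
  proof (rule subsetI)
    fix Q assume Q: "Q \<in> flats m d"
    then obtain x0 B where h: "x0 \<in> F2vec m" "B \<subseteq> F2vec m" "finite B" "card B = d" "indep B"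
      "Q = vadd x0 ` vsum ` Pow B" by (rule flatsE)
    have "Q \<in> flats n d" unfolding h(6) using h F2vec_mono[OF assms] by (intro flatsI) auto
    then show "Q \<in> {Q \<in> flats n d. Q \<subseteq> F2vec m}" using flats_sub_F[OF Q] by simp
  qed
next
  show "{Q \<in> flats n d. Q \<subseteq> F2vec m} \<subseteq> flats m d"
  proof (rule subsetI)
    fix Q assume "Q \<in> {Q \<in> flats n d. Q \<subseteq> F2vec m}"
    then have Q: "Q \<in> flats n d" "Q \<subseteq> F2vec m" by auto
    from Q(1) obtain x0 B where h: "x0 \<in> F2vec n" "B \<subseteq> F2vec n" "finite B" "card B = d" "indep B"
      "Q = vadd x0 ` vsum ` Pow B" by (rule flatsE)
    have x0: "x0 \<in> F2vec m"
    proof -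
      have "vadd x0 (vsum {}) \<in> Q" using h(6) by blast
      then show ?thesis using Q by auto
    qed
    have "B \<subseteq> F2vec m"
    proof
      fix b assume "b \<in> B"
      then have "vadd x0 (vsum {b}) \<in> Q" using h(6) by blast
      then have "vadd x0 b \<in> F2vec m" using Q by auto
      then have "vadd x0 (vadd x0 b) \<in> F2vec m" using x0 F2vec_vadd by blast
      then show "b \<in> F2vec m" by simp
    qed
    then show "Q \<in> flats m d" using h x0 by (auto intro: flatsI)
  qed
qed

definition linmap :: "(nat \<Rightarrow> (nat \<Rightarrow> bool)) \<Rightarrow> nat \<Rightarrow> (nat \<Rightarrow> bool) \<Rightarrow> (nat \<Rightarrow> bool)" where
  "linmap b N y = vsum (b ` {i. i < N \<and> y i})"

locale basis_enum =
  fixes b :: "nat \<Rightarrow> (nat \<Rightarrow> bool)" and N :: nat and B' :: "(nat \<Rightarrow> bool) set"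
  assumes bij: "bij_betw b {..<N} B'" and sub: "B' \<subseteq> F2vec N" and ind: "indep B'"
begin

abbreviation L where "L \<equiv> linmap b N"

lemma inj_b: "inj_on b {..<N}" using bij by (simp add: bij_betw_def)
lemma img_b: "b ` {..<N} = B'" using bij by (simp add: bij_betw_def)

lemma supp_sub: "{i. i < N \<and> y i} \<subseteq> {..<N}" by auto

lemma L_F: "L y \<in> F2vec N"
proof -
  have "b ` {i. i < N \<and> y i} \<subseteq> F2vec N" using img_b sub supp_sub by blast
  then show ?thesis unfolding linmap_def by (rule F2vec_vsum)
qed

lemma L_add: "L (vadd x y) = vadd (L x) (L y)"
proof -
  let ?P = "{i. i < N \<and> x i}" and ?R = "{i. i < N \<and> y i}"
  have e1: "{i. i < N \<and> vadd x y i} = (?P - ?R) \<union> (?R - ?P)" unfolding vadd_def by auto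
  have "b ` ((?P - ?R) \<union> (?R - ?P)) = (b ` ?P - b ` ?R) \<union> (b ` ?R - b ` ?P)"
  proof -
    have "b ` (?P - ?R) = b ` ?P - b ` ?R"
      by (rule inj_on_image_set_diff[OF inj_b]) auto
    moreover have "b ` (?R - ?P) = b ` ?R - b ` ?P"
      by (rule inj_on_image_set_diff[OF inj_b]) auto
    ultimately show ?thesis by (simp add: image_Un)
  qed
  then have "L (vadd x y) = vsum ((b ` ?P - b ` ?R) \<union> (b ` ?R - b ` ?P))"
    unfolding linmap_def e1 by simp
  also have "\<dots> = vadd (vsum (b ` ?P)) (vsum (b ` ?R))"
    by (rule vsum_symdiff) auto
  finally show ?thesis unfolding linmap_def .
qed

lemma L_zero[simp]: "L vzero = vzero" unfolding linmap_def by simp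

lemma L_zero_iff: assumes "x \<in> F2vec N" "L x = vzero" shows "x = vzero"
proof -
  let ?P = "{i. i < N \<and> x i}"
  have "b ` ?P \<subseteq> B'" using img_b by auto
  then have "b ` ?P = {}" using ind assms(2) unfolding indep_def linmap_def by blast
  then have "?P = {}" by simp
  then show ?thesis using assms(1) unfolding F2vec_def by (auto simp: fun_eq_iff not_less)
qed

lemma L_inj: "inj_on L (F2vec N)"
proof (rule inj_onI)
  fix x y assume xy: "x \<in> F2vec N" "y \<in> F2vec N" "L x = L y"
  then have "L (vadd x y) = vzero" by (simp add: L_add)
  moreover have "vadd x y \<in> F2vec N" using xy F2vec_vadd by blast
  ultimately have "vadd x y = vzero" using L_zero_iff by blast
  then show "x = y" by (simp add: vadd_eq_zero_iff)
qed

lemma L_vsum: "finite S \<Longrightarrow> S \<subseteq> F2vec N \<Longrightarrow> L (vsum S) = vsum (L ` S)"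
proof (induction S rule: finite_induct)
  case empty then show ?case by simp
next
  case (insert x S)
  have "L x \<notin> L ` S"
  proof
    assume "L x \<in> L ` S"
    then obtain y where "y \<in> S" "L x = L y" by auto
    moreover have "x \<in> F2vec N" "y \<in> F2vec N" using insert.prems \<open>y \<in> S\<close> by auto
    ultimately have "x = y" using inj_onD[OF L_inj] by blast
    then show False using insert.hyps \<open>y \<in> S\<close> by simp
  qed
  then have "vsum (L ` insert x S) = vadd (L x) (vsum (L ` S))"
    using vsum_insert[of "L ` S" "L x"] insert.hyps by simp
  moreover have "L (vsum (insert x S)) = vadd (L x) (L (vsum S))"
    using vsum_insert[OF insert.hyps] L_add by simp
  ultimately show ?case using insert by simp
qed

lemma L_bij: "bij_betw L (F2vec N) (F2vec N)"
proof -
  have "L ` F2vec N \<subseteq> F2vec N" using L_F by auto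
  then have "L ` F2vec N = F2vec N" using endo_inj_surj[OF finite_F2vec _ L_inj] by simp
  then show ?thesis using L_inj by (simp add: bij_betw_def)
qed

lemma L_span:
  assumes "d \<le> N" "b ` {..<d} = B"
  shows "L ` F2vec d = vsum ` Pow B"
proof
  show "L ` F2vec d \<subseteq> vsum ` Pow B"
  proof
    fix z assume "z \<in> L ` F2vec d"
    then obtain y where y: "y \<in> F2vec d" "z = L y" by auto
    have "\<forall>i. y i \<longrightarrow> i < d" using y(1) unfolding F2vec_def using not_less by blast
    then have "{i. i < N \<and> y i} \<subseteq> {..<d}" by auto
    then have "b ` {i. i < N \<and> y i} \<in> Pow B" using assms(2) by auto
    then show "z \<in> vsum ` Pow B" unfolding y(2) linmap_def by blast
  qed
next
  show "vsum ` Pow B \<subseteq> L ` F2vec d"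
  proof
    fix z assume "z \<in> vsum ` Pow B"
    then obtain S where S: "S \<subseteq> B" "z = vsum S" by auto
    then have "S \<subseteq> b ` {..<d}" using assms(2) by simp
    then obtain P where P: "P \<subseteq> {..<d}" "S = b ` P" unfolding subset_image_iff by blast
    let ?y = "\<lambda>i. i \<in> P"
    have "?y \<in> F2vec d" using P(1) unfolding F2vec_def by auto
    moreover have "{i. i < N \<and> ?y i} = P" using P(1) assms(1) by auto
    ultimately have "L ?y = z" unfolding S(2) P(2) linmap_def by simp
    then show "z \<in> L ` F2vec d" using \<open>?y \<in> F2vec d\<close> by blast
  qed
qed

end

definition Gset :: "nat \<Rightarrow> nat \<Rightarrow> ((nat \<Rightarrow> bool) \<Rightarrow> (nat \<Rightarrow> bool)) set" where
  "Gset N d = {T \<in> F2vec N \<rightarrow>\<^sub>E F2vec N. bij_betw T (F2vec N) (F2vec N) \<and>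
      (\<forall>Q\<in>flats N d. T ` Q \<in> flats N d)}"

lemma finite_Gset: "finite (Gset N d)"
proof -
  have "finite (F2vec N \<rightarrow>\<^sub>E F2vec N)" by (intro finite_PiE) auto
  then show ?thesis unfolding Gset_def by (rule finite_subset[rotated]) auto
qed

lemma image_Pow_image: "(image f) ` Pow C = Pow (f ` C)"
proof
  show "(image f) ` Pow C \<subseteq> Pow (f ` C)" by auto
  show "Pow (f ` C) \<subseteq> (image f) ` Pow C"
  proof
    fix S' assume "S' \<in> Pow (f ` C)"
    then obtain S where "S \<subseteq> C" "S' = f ` S" unfolding Pow_iff subset_image_iff by blast
    then show "S' \<in> (image f) ` Pow C" by blast
  qed
qed

context basis_enum
begin

definition aff where "aff x0 = restrict (\<lambda>y. vadd x0 (L y)) (F2vec N)"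

lemma aff_flat:
  assumes x0: "x0 \<in> F2vec N" and Q: "Q \<in> flats N d"
  shows "aff x0 ` Q \<in> flats N d"
proof -
  from Q obtain x1 C where h: "x1 \<in> F2vec N" "C \<subseteq> F2vec N" "finite C" "card C = d" "indep C"
    "Q = vadd x1 ` vsum ` Pow C" by (rule flatsE)
  let ?x = "vadd x0 (L x1)"
  have QF: "Q \<subseteq> F2vec N" using flats_sub_F[OF Q] .
  have img: "aff x0 ` Q = vadd ?x ` vsum ` Pow (L ` C)"
  proof -
    have "aff x0 ` Q = (\<lambda>y. vadd x0 (L y)) ` Q" unfolding aff_def using QF by auto
    also have "\<dots> = (\<lambda>S. vadd x0 (L (vadd x1 (vsum S)))) ` Pow C" unfolding h(6) by (simp add: image_image)
    also have "\<dots> = (\<lambda>S. vadd ?x (vsum (L ` S))) ` Pow C"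
    proof (rule image_cong[OF refl])
      fix S assume "S \<in> Pow C"
      then have "finite S" "S \<subseteq> F2vec N" using h(2,3) finite_subset by auto
      then show "vadd x0 (L (vadd x1 (vsum S))) = vadd ?x (vsum (L ` S))"
        by (simp add: L_add L_vsum vadd_assoc)
    qed
    also have "\<dots> = vadd ?x ` vsum ` (image L) ` Pow C" by (simp add: image_image)
    also have "\<dots> = vadd ?x ` vsum ` Pow (L ` C)" by (simp add: image_Pow_image)
    finally show ?thesis .
  qed
  have injC: "inj_on L C" using inj_on_subset[OF L_inj h(2)] .
  have "indep (L ` C)" unfolding indep_def
  proof (intro allI impI)
    fix S' assume S': "S' \<subseteq> L ` C" "S' \<noteq> {}"
    then obtain S where S: "S \<subseteq> C" "S' = L ` S" unfolding subset_image_iff by blast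
    then have "S \<noteq> {}" using S' by auto
    then have nz: "vsum S \<noteq> vzero" using h(5) S(1) unfolding indep_def by blast
    have SF: "finite S" "S \<subseteq> F2vec N" using S(1) h(2,3) finite_subset by auto
    have "vsum S' = L (vsum S)" using L_vsum[OF SF] S(2) by simp
    moreover have "vsum S \<in> F2vec N" using F2vec_vsum SF(2) .
    ultimately show "vsum S' \<noteq> vzero" using L_zero_iff nz by metis
  qed
  moreover have "?x \<in> F2vec N" using F2vec_vadd[OF x0 L_F] .
  moreover have "L ` C \<subseteq> F2vec N" using L_F by auto
  moreover have "card (L ` C) = d" using card_image[OF injC] h(4) by simp
  ultimately show ?thesis unfolding img using h(3) by (intro flatsI) auto
qed

lemma aff_bij: assumes x0: "x0 \<in> F2vec N" shows "bij_betw (aff x0) (F2vec N) (F2vec N)"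
proof -
  have "inj_on (vadd x0 \<circ> L) (F2vec N)"
    by (rule comp_inj_on[OF L_inj inj_on_subset[OF vadd_inj subset_UNIV]])
  then have inj: "inj_on (\<lambda>y. vadd x0 (L y)) (F2vec N)" by (simp add: o_def)
  have sub: "(\<lambda>y. vadd x0 (L y)) ` F2vec N \<subseteq> F2vec N" using F2vec_vadd[OF x0 L_F] by auto
  have "bij_betw (\<lambda>y. vadd x0 (L y)) (F2vec N) (F2vec N)"
    using endo_inj_surj[OF finite_F2vec sub inj] inj by (simp add: bij_betw_def)
  then show ?thesis unfolding aff_def by (rule bij_betw_cong[THEN iffD1, rotated]) simp
qed

lemma aff_G: assumes x0: "x0 \<in> F2vec N" shows "aff x0 \<in> Gset N d"
  unfolding Gset_def using aff_flat[OF x0] aff_bij[OF x0] F2vec_vadd[OF x0 L_F]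
  by (auto simp: aff_def)

lemma aff_span:
  assumes "d \<le> N" "b ` {..<d} = B"
  shows "aff x0 ` F2vec d = vadd x0 ` vsum ` Pow B"
proof -
  have "F2vec d \<subseteq> F2vec N" using F2vec_mono[OF assms(1)] .
  then have "aff x0 ` F2vec d = vadd x0 ` L ` F2vec d" unfolding aff_def by (auto simp: image_image)
  then show ?thesis using L_span[OF assms] by simp
qed

end

lemma enum_exists:
  assumes "finite B'" "B \<subseteq> B'" "card B = d" "card B' = N"
  shows "\<exists>b. bij_betw b {..<N} B' \<and> b ` {..<d} = B"
proof -
  have fB: "finite B" using assms finite_subset by auto
  obtain f where f: "bij_betw f {0..<d} B" using ex_bij_betw_nat_finite[OF fB] assms(3) by auto
  have cd: "card (B' - B) = N - d" using assms card_Diff_subset fB by metis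
  obtain h where h: "bij_betw h {0..<N - d} (B' - B)"
    using ex_bij_betw_nat_finite[of "B' - B"] assms(1) cd by auto
  have dN: "d \<le> N" using card_mono[OF assms(1,2)] assms by simp
  define g where "g i = (if i < d then f i else h (i - d))" for i
  have g1: "g ` {..<d} = B" using f unfolding g_def bij_betw_def by (auto simp: atLeast0LessThan)
  have "(\<lambda>i. i - d) ` {d..<N} = {0..<N - d}"
  proof
    show "(\<lambda>i. i - d) ` {d..<N} \<subseteq> {0..<N - d}" by auto
    show "{0..<N - d} \<subseteq> (\<lambda>i. i - d) ` {d..<N}"
    proof
      fix j assume "j \<in> {0..<N - d}"
      then have "j + d \<in> {d..<N}" "j = (j + d) - d" by auto
      then show "j \<in> (\<lambda>i. i - d) ` {d..<N}" by blast
    qed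
  qed
  moreover have "g ` {d..<N} = (\<lambda>i. h (i - d)) ` {d..<N}" unfolding g_def by (rule image_cong) auto
  moreover have "(\<lambda>i. h (i - d)) ` {d..<N} = h ` ((\<lambda>i. i - d) ` {d..<N})" by (simp add: image_image)
  ultimately have "g ` {d..<N} = h ` {0..<N - d}" by simp
  then have g2: "g ` {d..<N} = B' - B" using h unfolding bij_betw_def by simp
  have "{..<N} = {..<d} \<union> {d..<N}" using dN by auto
  then have img: "g ` {..<N} = B'" using g1 g2 assms(2) by (auto simp: image_Un)
  have "inj_on g {..<N}" by (rule eq_card_imp_inj_on) (use img assms(4) in auto)
  then show ?thesis using img g1 unfolding bij_betw_def by auto
qed

lemma transitive_G:
  assumes Q: "Q \<in> flats N d" and dN: "d \<le> N"
  shows "\<exists>g\<in>Gset N d. g ` F2vec d = Q"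
proof -
  from Q obtain x0 B where h: "x0 \<in> F2vec N" "B \<subseteq> F2vec N" "finite B" "card B = d" "indep B"
    "Q = vadd x0 ` vsum ` Pow B" by (rule flatsE)
  have "\<exists>B'. B \<subseteq> B' \<and> B' \<subseteq> F2vec N \<and> finite B' \<and> indep B' \<and> card B' = N"
    by (rule extend_indep[OF h(2,3,5)]) (use h(4) dN in auto)
  then obtain B' where B': "B \<subseteq> B'" "B' \<subseteq> F2vec N" "finite B'" "indep B'" "card B' = N"
    by blast
  have "\<exists>b. bij_betw b {..<N} B' \<and> b ` {..<d} = B"
    by (rule enum_exists[OF B'(3,1) h(4) B'(5)])
  then obtain b where b: "bij_betw b {..<N} B'" "b ` {..<d} = B" by blast
  interpret basis_enum b N B' by unfold_locales (rule b(1), rule B'(2), rule B'(4))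
  have "aff x0 \<in> Gset N d" by (rule aff_G[OF h(1)])
  moreover have "aff x0 ` F2vec d = Q" using aff_span[OF dN b(2)] h(6) by simp
  ultimately show ?thesis by blast
qed

lemma G_memI:
  assumes "T \<in> F2vec N \<rightarrow>\<^sub>E F2vec N" "bij_betw T (F2vec N) (F2vec N)" "\<And>Q. Q \<in> flats N d \<Longrightarrow> T ` Q \<in> flats N d"
  shows "T \<in> Gset N d"
  using assms unfolding Gset_def by blast

lemma G_memD:
  assumes "T \<in> Gset N d"
  shows "T \<in> F2vec N \<rightarrow>\<^sub>E F2vec N" "bij_betw T (F2vec N) (F2vec N)" "\<And>Q. Q \<in> flats N d \<Longrightarrow> T ` Q \<in> flats N d"
  using assms unfolding Gset_def by blast+

lemma restrict_image_sub: "B \<subseteq> A \<Longrightarrow> restrict f A ` B = f ` B"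
  by (auto simp: restrict_def)

lemma G_id: "restrict (\<lambda>x. x) (F2vec N) \<in> Gset N d"
proof (rule G_memI)
  show "restrict (\<lambda>x. x) (F2vec N) \<in> F2vec N \<rightarrow>\<^sub>E F2vec N" by auto
  show "bij_betw (restrict (\<lambda>x. x) (F2vec N)) (F2vec N) (F2vec N)"
    by (rule bij_betw_cong[THEN iffD1, rotated]) (auto simp: bij_betw_def)
  fix Q assume Q: "Q \<in> flats N d"
  then have "restrict (\<lambda>x. x) (F2vec N) ` Q = Q" using flats_sub_F[OF Q] restrict_image_sub by force
  then show "restrict (\<lambda>x. x) (F2vec N) ` Q \<in> flats N d" using Q by simp
qed

lemma G_comp:
  assumes T: "T \<in> Gset N d" and g: "g \<in> Gset N d"
  shows "restrict (\<lambda>x. T (g x)) (F2vec N) \<in> Gset N d"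
proof (rule G_memI)
  note T1 = G_memD[OF T] and g1 = G_memD[OF g]
  show "restrict (\<lambda>x. T (g x)) (F2vec N) \<in> F2vec N \<rightarrow>\<^sub>E F2vec N"
    using T1(1) g1(1) by (auto simp: PiE_iff)
  have "bij_betw (T \<circ> g) (F2vec N) (F2vec N)" by (rule bij_betw_trans[OF g1(2) T1(2)])
  then show "bij_betw (restrict (\<lambda>x. T (g x)) (F2vec N)) (F2vec N) (F2vec N)"
    by (rule bij_betw_cong[THEN iffD1, rotated]) auto
  fix Q assume Q: "Q \<in> flats N d"
  have "restrict (\<lambda>x. T (g x)) (F2vec N) ` Q = T ` (g ` Q)"
    using restrict_image_sub[OF flats_sub_F[OF Q]] by (simp add: image_image)
  then show "restrict (\<lambda>x. T (g x)) (F2vec N) ` Q \<in> flats N d" using T1(3) g1(3) Q by simp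
qed

lemma G_inj_F: "T \<in> Gset N d \<Longrightarrow> inj_on T (F2vec N)"
  using G_memD(2) bij_betw_def by blast

lemma G_flats_bij:
  assumes T: "T \<in> Gset N d"
  shows "inj_on (image T) (flats N d)" "(image T) ` flats N d = flats N d"
proof -
  have "inj_on (image T) (Pow (F2vec N))" by (rule inj_on_image_Pow[OF G_inj_F[OF T]])
  moreover have "flats N d \<subseteq> Pow (F2vec N)" using flats_sub_F by blast
  ultimately show inj: "inj_on (image T) (flats N d)" by (rule inj_on_subset)
  show "(image T) ` flats N d = flats N d"
    by (rule endo_inj_surj[OF finite_flats _ inj]) (use G_memD(3)[OF T] in blast)
qed

lemma G_inv:
  assumes g: "g \<in> Gset N d"
  shows "\<exists>h\<in>Gset N d. \<forall>x\<in>F2vec N. h (g x) = x"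
proof -
  note g1 = G_memD[OF g]
  define h where "h = restrict (inv_into (F2vec N) g) (F2vec N)"
  have hg: "\<forall>x\<in>F2vec N. h (g x) = x"
    using g1(2) unfolding h_def bij_betw_def by (auto simp: inv_into_f_f)
  have "h \<in> Gset N d"
  proof (rule G_memI)
    have bi: "bij_betw (inv_into (F2vec N) g) (F2vec N) (F2vec N)" by (rule bij_betw_inv_into[OF g1(2)])
    then show "h \<in> F2vec N \<rightarrow>\<^sub>E F2vec N" unfolding h_def bij_betw_def by auto
    show "bij_betw h (F2vec N) (F2vec N)" unfolding h_def
      by (rule bij_betw_cong[THEN iffD1, rotated, OF bi]) auto
    fix Q assume Q: "Q \<in> flats N d"
    then obtain Q'' where Q'': "Q'' \<in> flats N d" "Q = g ` Q''" using G_flats_bij(2)[OF g] by blast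
    have "h ` Q = (\<lambda>x. h (g x)) ` Q''" unfolding Q''(2) by (simp add: image_image)
    also have "\<dots> = Q''" using hg flats_sub_F[OF Q''(1)] by (auto simp: image_iff subset_iff)
    finally show "h ` Q \<in> flats N d" using Q''(1) by simp
  qed
  then show ?thesis using hg by blast
qed

lemma cnt_le:
  assumes g: "g \<in> Gset N d" and Q1: "Q1 \<subseteq> F2vec N" and Q2: "g ` Q1 = Q2"
  shows "card {T \<in> Gset N d. T ` Q2 \<subseteq> F2vec n} \<le> card {T \<in> Gset N d. T ` Q1 \<subseteq> F2vec n}"
proof (rule card_inj_on_le)
  let ?phi = "\<lambda>T. restrict (\<lambda>x. T (g x)) (F2vec N)"
  note g1 = G_memD[OF g]
  show "?phi ` {T \<in> Gset N d. T ` Q2 \<subseteq> F2vec n} \<subseteq> {T \<in> Gset N d. T ` Q1 \<subseteq> F2vec n}"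
  proof
    fix T' assume "T' \<in> ?phi ` {T \<in> Gset N d. T ` Q2 \<subseteq> F2vec n}"
    then obtain T where T: "T \<in> Gset N d" "T ` Q2 \<subseteq> F2vec n" "T' = ?phi T" by blast
    have "T' ` Q1 = T ` Q2" unfolding T(3) Q2[symmetric] using restrict_image_sub[OF Q1] by (simp add: image_image)
    then show "T' \<in> {T \<in> Gset N d. T ` Q1 \<subseteq> F2vec n}" using G_comp[OF T(1) g] T by simp
  qed
  show "finite {T \<in> Gset N d. T ` Q1 \<subseteq> F2vec n}" using finite_Gset by simp
  show "inj_on ?phi {T \<in> Gset N d. T ` Q2 \<subseteq> F2vec n}"
  proof (rule inj_onI)
    fix T T' assume T: "T \<in> {T \<in> Gset N d. T ` Q2 \<subseteq> F2vec n}" "T' \<in> {T \<in> Gset N d. T ` Q2 \<subseteq> F2vec n}"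
      and eq: "?phi T = ?phi T'"
    have gs: "g ` F2vec N = F2vec N" using g1(2) by (simp add: bij_betw_def)
    have "\<forall>x\<in>F2vec N. T (g x) = T' (g x)"
    proof
      fix x assume "x \<in> F2vec N"
      then show "T (g x) = T' (g x)" using fun_cong[OF eq, of x] by simp
    qed
    then have pt: "\<forall>y\<in>F2vec N. T y = T' y" using gs by (metis imageE)
    show "T = T'"
    proof (rule extensionalityI)
      show "T \<in> extensional (F2vec N)" using G_memD(1) T(1) by (auto simp: PiE_def)
      show "T' \<in> extensional (F2vec N)" using G_memD(1) T(2) by (auto simp: PiE_def)
      show "\<And>x. x \<in> F2vec N \<Longrightarrow> T x = T' x" using pt by blast
    qed
  qed
qed

lemma cnt_const:
  assumes dN: "d \<le> N" and Q: "Q \<in> flats N d"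
  shows "card {T \<in> Gset N d. T ` Q \<subseteq> F2vec n} = card {T \<in> Gset N d. T ` F2vec d \<subseteq> F2vec n}"
proof -
  obtain g where g: "g \<in> Gset N d" "g ` F2vec d = Q" using transitive_G[OF Q dN] by blast
  obtain h where h: "h \<in> Gset N d" "\<forall>x\<in>F2vec N. h (g x) = x" using G_inv[OF g(1)] by blast
  have FdN: "F2vec d \<subseteq> F2vec N" by (rule F2vec_mono[OF dN])
  have "h ` Q = F2vec d"
  proof -
    have "h ` Q = (\<lambda>x. h (g x)) ` F2vec d" unfolding g(2)[symmetric] by (simp add: image_image)
    also have "\<dots> = F2vec d" using h(2) FdN by (simp add: subset_iff)
    finally show ?thesis .
  qed
  then have "card {T \<in> Gset N d. T ` F2vec d \<subseteq> F2vec n} \<le> card {T \<in> Gset N d. T ` Q \<subseteq> F2vec n}"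
    using cnt_le[OF h(1) flats_sub_F[OF Q]] by simp
  moreover have "card {T \<in> Gset N d. T ` Q \<subseteq> F2vec n} \<le> card {T \<in> Gset N d. T ` F2vec d \<subseteq> F2vec n}"
    using cnt_le[OF g(1) FdN g(2)] .
  ultimately show ?thesis by simp
qed

lemma count_T:
  assumes nN: "n \<le> N" and T: "T \<in> Gset N d" and A: "A \<subseteq> F2vec N"
  shows "card {Q' \<in> flats n d. P (card (Q' \<inter> (T ` A \<inter> F2vec n)))}
       = card {Q \<in> flats N d. T ` Q \<subseteq> F2vec n \<and> P (card (Q \<inter> A))}"
proof -
  let ?L = "{Q' \<in> flats n d. P (card (Q' \<inter> (T ` A \<inter> F2vec n)))}"
  let ?R = "{Q \<in> flats N d. T ` Q \<subseteq> F2vec n \<and> P (card (Q \<inter> A))}"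
  have injT: "inj_on T (F2vec N)" by (rule G_inj_F[OF T])
  have cardeq: "card (T ` Q \<inter> (T ` A \<inter> F2vec n)) = card (Q \<inter> A)"
    if "Q \<in> flats N d" "T ` Q \<subseteq> F2vec n" for Q
  proof -
    have QF: "Q \<subseteq> F2vec N" using flats_sub_F[OF that(1)] .
    have "T ` Q \<inter> (T ` A \<inter> F2vec n) = T ` Q \<inter> T ` A" using that(2) by blast
    also have "\<dots> = T ` (Q \<inter> A)" by (rule inj_on_image_Int[OF injT QF A, symmetric])
    finally have "card (T ` Q \<inter> (T ` A \<inter> F2vec n)) = card (T ` (Q \<inter> A))" by simp
    also have "\<dots> = card (Q \<inter> A)" by (rule card_image[OF inj_on_subset[OF injT]]) (use QF in blast)
    finally show ?thesis .
  qed
  have fl: "flats n d = {Q \<in> flats N d. Q \<subseteq> F2vec n}" by (rule flats_restrict[OF nN])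
  have inj: "inj_on (image T) ?R" using G_flats_bij(1)[OF T] by (rule inj_on_subset) auto
  have "image T ` ?R = ?L"
  proof
    show "image T ` ?R \<subseteq> ?L"
    proof
      fix Q' assume "Q' \<in> image T ` ?R"
      then obtain Q where Q: "Q \<in> flats N d" "T ` Q \<subseteq> F2vec n" "P (card (Q \<inter> A))" "Q' = T ` Q" by blast
      have "Q' \<in> flats n d" unfolding fl using G_memD(3)[OF T Q(1)] Q by simp
      then show "Q' \<in> ?L" using cardeq[OF Q(1,2)] Q by simp
    qed
  next
    show "?L \<subseteq> image T ` ?R"
    proof
      fix Q' assume Q': "Q' \<in> ?L"
      then have Q'N: "Q' \<in> flats N d" "Q' \<subseteq> F2vec n" unfolding fl by auto
      then obtain Q where Q: "Q \<in> flats N d" "Q' = T ` Q" using G_flats_bij(2)[OF T] by blast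
      have "P (card (Q \<inter> A))" using Q' cardeq[OF Q(1)] Q Q'N(2) by auto
      then have "Q \<in> ?R" using Q Q'N by auto
      then show "Q' \<in> image T ` ?R" using Q(2) by blast
    qed
  qed
  then show ?thesis using card_image[OF inj] by simp
qed

lemma double_count:
  assumes nN: "n \<le> N" and dN: "d \<le> N" and A: "A \<subseteq> F2vec N"
  shows "(\<Sum>T\<in>Gset N d. card {Q' \<in> flats n d. P (card (Q' \<inter> (T ` A \<inter> F2vec n)))})
       = card {T \<in> Gset N d. T ` F2vec d \<subseteq> F2vec n} * card {Q \<in> flats N d. P (card (Q \<inter> A))}"
proof -
  let ?G = "Gset N d" and ?S = "{Q \<in> flats N d. P (card (Q \<inter> A))}"
  let ?c = "card {T \<in> Gset N d. T ` F2vec d \<subseteq> F2vec n}"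
  have fS: "finite ?S" using finite_flats by simp
  have "(\<Sum>T\<in>?G. card {Q' \<in> flats n d. P (card (Q' \<inter> (T ` A \<inter> F2vec n)))})
      = (\<Sum>T\<in>?G. card {Q \<in> flats N d. T ` Q \<subseteq> F2vec n \<and> P (card (Q \<inter> A))})"
    using count_T[OF nN _ A] by (intro sum.cong) auto
  also have "\<dots> = (\<Sum>T\<in>?G. \<Sum>Q\<in>?S. if T ` Q \<subseteq> F2vec n then 1 else 0)"
  proof (rule sum.cong[OF refl])
    fix T assume "T \<in> ?G"
    have "{Q \<in> flats N d. T ` Q \<subseteq> F2vec n \<and> P (card (Q \<inter> A))} = {Q \<in> ?S. T ` Q \<subseteq> F2vec n}" by auto
    then show "card {Q \<in> flats N d. T ` Q \<subseteq> F2vec n \<and> P (card (Q \<inter> A))}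
        = (\<Sum>Q\<in>?S. if T ` Q \<subseteq> F2vec n then 1 else 0)"
      using sum.inter_filter[OF fS, of "\<lambda>_. (1::nat)" "\<lambda>Q. T ` Q \<subseteq> F2vec n"] by simp
  qed
  also have "\<dots> = (\<Sum>Q\<in>?S. \<Sum>T\<in>?G. if T ` Q \<subseteq> F2vec n then 1 else 0)" by (rule sum.swap)
  also have "\<dots> = (\<Sum>Q\<in>?S. ?c)"
  proof (rule sum.cong[OF refl])
    fix Q assume Q: "Q \<in> ?S"
    have "(\<Sum>T\<in>?G. if T ` Q \<subseteq> F2vec n then 1 else 0) = card {T \<in> ?G. T ` Q \<subseteq> F2vec n}"
      using sum.inter_filter[OF finite_Gset[of N d], where g="\<lambda>_. (1::nat)" and P="\<lambda>T. T ` Q \<subseteq> F2vec n"] by simp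
    also have "\<dots> = ?c" using cnt_const[OF dN] Q by simp
    finally show "(\<Sum>T\<in>?G. if T ` Q \<subseteq> F2vec n then 1 else 0) = ?c" .
  qed
  also have "\<dots> = ?c * card ?S" by simp
  finally show ?thesis .
qed

lemma lam_A_nonneg: "0 \<le> lam_A n d s A" unfolding lam_A_def by simp

lemma lam_A_le1: "lam_A n d s A \<le> 1"
proof -
  have "card {Q \<in> flats n d. card (Q \<inter> A) = s} \<le> card (flats n d)"
    by (rule card_mono[OF finite_flats]) auto
  then show ?thesis unfolding lam_A_def by (cases "card (flats n d) = 0") (auto simp: divide_le_eq_1)
qed

lemma lam_n_fin: "finite ((\<lambda>A. lam_A n d s A) ` Pow (F2vec n))" by simp

lemma lam_n_ge: "A \<subseteq> F2vec n \<Longrightarrow> lam_A n d s A \<le> lam_n n d s"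
  unfolding lam_n_def by (rule Max_ge[OF lam_n_fin]) auto

lemma lam_n_obtain: "\<exists>A. A \<subseteq> F2vec n \<and> lam_n n d s = lam_A n d s A"
proof -
  have "lam_n n d s \<in> (\<lambda>A. lam_A n d s A) ` Pow (F2vec n)"
    unfolding lam_n_def by (rule Max_in[OF lam_n_fin]) auto
  then show ?thesis by auto
qed

lemma lam_n_nonneg: "0 \<le> lam_n n d s"
proof -
  obtain A where "lam_n n d s = lam_A n d s A" using lam_n_obtain by blast
  then show ?thesis using lam_A_nonneg by simp
qed

lemma lam_n_le1: "lam_n n d s \<le> 1"
proof -
  obtain A where "lam_n n d s = lam_A n d s A" using lam_n_obtain by blast
  then show ?thesis using lam_A_le1 by simp
qed

lemma lam_n_mono:
  assumes dn: "d \<le> n"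
  shows "lam_n (Suc n) d s \<le> lam_n n d s"
proof -
  let ?N = "Suc n"
  obtain A where A: "A \<subseteq> F2vec ?N" "lam_n ?N d s = lam_A ?N d s A" using lam_n_obtain by blast
  let ?G = "Gset ?N d"
  let ?c = "card {T \<in> ?G. T ` F2vec d \<subseteq> F2vec n}"
  let ?X = "card {Q \<in> flats ?N d. card (Q \<inter> A) = s}"
  let ?lam = "lam_n n d s"
  have nN: "n \<le> ?N" and dN: "d \<le> ?N" using dn by auto
  have fn: "card (flats n d) > 0" using flats_nonempty[OF dn] finite_flats card_gt_0_iff by blast
  have fN: "card (flats ?N d) > 0" using flats_nonempty[OF dN] finite_flats card_gt_0_iff by blast
  have Gpos: "card ?G > 0" using G_id[of ?N d] finite_Gset card_gt_0_iff by blast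
  have each: "real (card {Q' \<in> flats n d. card (Q' \<inter> (T ` A \<inter> F2vec n)) = s}) \<le> ?lam * card (flats n d)"
    for T
  proof -
    have "lam_A n d s (T ` A \<inter> F2vec n) \<le> ?lam" by (rule lam_n_ge) auto
    then show ?thesis unfolding lam_A_def using fn by (simp add: divide_le_eq)
  qed
  have eq1: "(\<Sum>T\<in>?G. card {Q' \<in> flats n d. card (Q' \<inter> (T ` A \<inter> F2vec n)) = s}) = ?c * ?X"
    by (rule double_count[OF nN dN A(1)])
  have eq2: "(\<Sum>T\<in>?G. card {Q' \<in> flats n d. True}) = ?c * card {Q \<in> flats ?N d. True}"
    by (rule double_count[OF nN dN A(1)])
  then have eq2': "card ?G * card (flats n d) = ?c * card (flats ?N d)" by simp
  have "real (?c * ?X) = (\<Sum>T\<in>?G. real (card {Q' \<in> flats n d. card (Q' \<inter> (T ` A \<inter> F2vec n)) = s}))"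
    unfolding eq1[symmetric] by simp
  also have "\<dots> \<le> (\<Sum>T\<in>?G. ?lam * card (flats n d))" by (rule sum_mono) (rule each)
  also have "\<dots> = ?lam * real (card ?G * card (flats n d))" by simp
  also have "\<dots> = ?lam * real (?c * card (flats ?N d))" by (simp only: eq2')
  finally have ineq: "real ?c * real ?X \<le> real ?c * (?lam * real (card (flats ?N d)))"
    by (simp add: mult_ac)
  have "card ?G * card (flats n d) > 0" using Gpos fn by simp
  then have "?c * card (flats ?N d) > 0" using eq2' by simp
  then have cpos: "?c > 0" by simp
  then have "real ?X \<le> ?lam * real (card (flats ?N d))" using ineq by simp
  then have "lam_A ?N d s A \<le> ?lam" unfolding lam_A_def using fN by (simp add: divide_le_eq)
  then show ?thesis using A(2) by simp
qed

definition wt :: "real \<Rightarrow> 'a set \<Rightarrow> 'a set \<Rightarrow> real" where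
  "wt p X B = p ^ card (X - B) * (1 - p) ^ card B"

lemma wt_split:
  assumes K: "finite K" and R: "finite R" and disj: "K \<inter> R = {}"
  shows "(\<Sum>B\<in>Pow (K \<union> R). wt p (K \<union> R) B * f (B \<inter> K)) = (\<Sum>C\<in>Pow K. wt p K C * f C)"
  using R disj
proof (induction R rule: finite_induct)
  case empty
  have "B \<in> Pow K \<Longrightarrow> B \<inter> K = B" for B by auto
  then show ?case by (intro sum.cong) auto
next
  case (insert a R)
  let ?X = "K \<union> R"
  have aK: "a \<notin> K" using insert.prems by auto
  have aX: "a \<notin> ?X" using aK insert.hyps by auto
  have fX: "finite ?X" using K insert.hyps by auto
  have IH: "(\<Sum>B\<in>Pow ?X. wt p ?X B * f (B \<inter> K)) = (\<Sum>C\<in>Pow K. wt p K C * f C)"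
    using insert.IH insert.prems by auto
  have eqX: "K \<union> insert a R = insert a ?X" by auto
  have disj2: "Pow ?X \<inter> insert a ` Pow ?X = {}" using aX by auto
  have injI: "inj_on (insert a) (Pow ?X)"
  proof (rule inj_onI)
    fix B B' assume h: "B \<in> Pow ?X" "B' \<in> Pow ?X" "insert a B = insert a B'"
    then have "a \<notin> B" "a \<notin> B'" using aX by auto
    then show "B = B'" using h(3) by (metis Diff_insert_absorb)
  qed
  have w1: "wt p (insert a ?X) B = p * wt p ?X B" if "B \<in> Pow ?X" for B
  proof -
    have "insert a ?X - B = insert a (?X - B)" using that aX by auto
    then have "card (insert a ?X - B) = Suc (card (?X - B))" using fX aX by simp
    then show ?thesis unfolding wt_def by simp
  qed
  have w2: "wt p (insert a ?X) (insert a B) = (1 - p) * wt p ?X B" if "B \<in> Pow ?X" for B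
  proof -
    have "insert a ?X - insert a B = ?X - B" using that aX by auto
    moreover have "finite B" using that fX finite_subset by auto
    moreover have "a \<notin> B" using that aX by auto
    ultimately have "insert a ?X - insert a B = ?X - B" "card (insert a B) = Suc (card B)" by simp_all
    then show ?thesis unfolding wt_def by simp
  qed
  have f2: "insert a B \<inter> K = B \<inter> K" for B using aK by auto
  have "(\<Sum>B\<in>Pow (K \<union> insert a R). wt p (K \<union> insert a R) B * f (B \<inter> K))
      = (\<Sum>B\<in>Pow ?X \<union> insert a ` Pow ?X. wt p (insert a ?X) B * f (B \<inter> K))"
    unfolding eqX Pow_insert ..
  also have "\<dots> = (\<Sum>B\<in>Pow ?X. wt p (insert a ?X) B * f (B \<inter> K))
      + (\<Sum>B\<in>insert a ` Pow ?X. wt p (insert a ?X) B * f (B \<inter> K))"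
    by (rule sum.union_disjoint) (use fX disj2 in auto)
  also have "(\<Sum>B\<in>insert a ` Pow ?X. wt p (insert a ?X) B * f (B \<inter> K))
      = (\<Sum>B\<in>Pow ?X. wt p (insert a ?X) (insert a B) * f (insert a B \<inter> K))"
    by (rule sum.reindex[OF injI, unfolded o_def])
  also have "(\<Sum>B\<in>Pow ?X. wt p (insert a ?X) (insert a B) * f (insert a B \<inter> K))
      = (\<Sum>B\<in>Pow ?X. (1 - p) * (wt p ?X B * f (B \<inter> K)))"
    by (rule sum.cong[OF refl]) (simp add: w2 f2)
  also have "(\<Sum>B\<in>Pow ?X. wt p (insert a ?X) B * f (B \<inter> K))
      = (\<Sum>B\<in>Pow ?X. p * (wt p ?X B * f (B \<inter> K)))"
    by (rule sum.cong[OF refl]) (simp add: w1)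
  finally show ?case unfolding sum_distrib_left[symmetric] IH by (simp add: algebra_simps)
qed

lemma wt_total:
  assumes "finite R"
  shows "(\<Sum>B\<in>Pow R. wt p R B) = 1"
  using wt_split[of "{}" R p "\<lambda>_. 1"] assms by (simp add: wt_def)

lemma wt_nonneg: "0 \<le> p \<Longrightarrow> p \<le> 1 \<Longrightarrow> 0 \<le> wt p X B"
  unfolding wt_def by simp

lemma wt_exact:
  assumes K: "finite K" "card K = s" "s \<ge> 1"
  shows "(\<Sum>C\<in>Pow K. wt p K C * (if card C = s - 1 then 1 else 0)) = s * p * (1 - p) ^ (s - 1)"
proof -
  have "(\<Sum>C\<in>Pow K. wt p K C * (if card C = s - 1 then 1 else 0))
      = (\<Sum>C\<in>{C \<in> Pow K. card C = s - 1}. wt p K C)"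
    using sum.inter_filter[of "Pow K" "wt p K" "\<lambda>C. card C = s - 1"] K(1) by (simp add: if_distrib cong: if_cong)
  also have "\<dots> = (\<Sum>C\<in>{C \<in> Pow K. card C = s - 1}. p * (1 - p) ^ (s - 1))"
  proof (rule sum.cong[OF refl])
    fix C assume C: "C \<in> {C \<in> Pow K. card C = s - 1}"
    then have "card (K - C) = 1" using K card_Diff_subset[of C K] finite_subset by auto
    then show "wt p K C = p * (1 - p) ^ (s - 1)" using C unfolding wt_def by simp
  qed
  also have "\<dots> = card {C. C \<subseteq> K \<and> card C = s - 1} * (p * (1 - p) ^ (s - 1))" by simp
  also have "card {C. C \<subseteq> K \<and> card C = s - 1} = s"
    using n_subsets[OF K(1), of "s - 1"] K(2,3) binomial_symmetric[of "s - 1" s] by simp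
  finally show ?thesis by simp
qed

lemma lam_n_sample:
  assumes s2: "2 \<le> s"
  shows "lam_n n d s \<le> (real s / (real s - 1)) ^ (s - 1) * lam_n n d (s - 1)"
proof -
  obtain A where A: "A \<subseteq> F2vec n" "lam_n n d s = lam_A n d s A" using lam_n_obtain by blast
  let ?fl = "flats n d"
  let ?lam' = "lam_n n d (s - 1)"
  define p :: real where "p = 1 / real s"
  have p01: "0 \<le> p" "p \<le> 1" using s2 unfolding p_def by auto
  have fA: "finite A" using finite_subset[OF A(1) finite_F2vec] .
  show ?thesis
  proof (cases "card ?fl = 0")
    case True
    then have "lam_n n d s = 0" using A(2) unfolding lam_A_def by simp
    moreover have "0 \<le> (real s / (real s - 1)) ^ (s - 1) * ?lam'"
      using s2 lam_n_nonneg by (intro mult_nonneg_nonneg zero_le_power) auto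
    ultimately show ?thesis by simp
  next
    case False
    then have flpos: "real (card ?fl) > 0" by simp
    let ?X = "card {Q \<in> ?fl. card (Q \<inter> A) = s}"
    let ?ind = "\<lambda>Q B. if card (Q \<inter> B) = s - 1 then 1 else (0::real)"
    have cnt: "real (card {Q \<in> ?fl. card (Q \<inter> B) = s - 1}) = (\<Sum>Q\<in>?fl. ?ind Q B)" for B
      using sum.inter_filter[OF finite_flats[of n d], where g="\<lambda>_. (1::real)" and P="\<lambda>Q. card (Q \<inter> B) = s - 1"]
      by simp
    have up: "real (card {Q \<in> ?fl. card (Q \<inter> B) = s - 1}) \<le> ?lam' * card ?fl" if "B \<subseteq> A" for B
    proof -
      have "lam_A n d (s - 1) B \<le> ?lam'" by (rule lam_n_ge) (use that A(1) in auto)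
      then show ?thesis unfolding lam_A_def using flpos by (simp add: divide_le_eq)
    qed
    have "(\<Sum>B\<in>Pow A. wt p A B * real (card {Q \<in> ?fl. card (Q \<inter> B) = s - 1}))
        \<le> (\<Sum>B\<in>Pow A. wt p A B * (?lam' * card ?fl))"
    proof (rule sum_mono)
      fix B assume "B \<in> Pow A"
      then have "B \<subseteq> A" by simp
      show "wt p A B * real (card {Q \<in> ?fl. card (Q \<inter> B) = s - 1}) \<le> wt p A B * (?lam' * card ?fl)"
        by (rule mult_left_mono[OF up[OF \<open>B \<subseteq> A\<close>] wt_nonneg[OF p01]])
    qed
    also have "\<dots> = ?lam' * card ?fl" using wt_total[OF fA, of p] by (simp add: sum_distrib_right[symmetric])
    finally have ub: "(\<Sum>B\<in>Pow A. wt p A B * real (card {Q \<in> ?fl. card (Q \<inter> B) = s - 1})) \<le> ?lam' * card ?fl" .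
    have "(\<Sum>B\<in>Pow A. wt p A B * real (card {Q \<in> ?fl. card (Q \<inter> B) = s - 1}))
        = (\<Sum>B\<in>Pow A. \<Sum>Q\<in>?fl. wt p A B * ?ind Q B)"
      unfolding cnt by (simp add: sum_distrib_left)
    also have "\<dots> = (\<Sum>Q\<in>?fl. \<Sum>B\<in>Pow A. wt p A B * ?ind Q B)" by (rule sum.swap)
    finally have swap: "(\<Sum>B\<in>Pow A. wt p A B * real (card {Q \<in> ?fl. card (Q \<inter> B) = s - 1}))
        = (\<Sum>Q\<in>?fl. \<Sum>B\<in>Pow A. wt p A B * ?ind Q B)" .
    have exact: "(\<Sum>B\<in>Pow A. wt p A B * ?ind Q B) = real s * p * (1 - p) ^ (s - 1)"
      if Q: "card (Q \<inter> A) = s" for Q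
    proof -
      let ?K = "Q \<inter> A" and ?R = "A - Q"
      have KR: "?K \<union> ?R = A" by auto
      have fK: "finite ?K" "finite ?R" using fA by auto
      have "(\<Sum>B\<in>Pow A. wt p A B * ?ind Q B)
          = (\<Sum>B\<in>Pow (?K \<union> ?R). wt p (?K \<union> ?R) B * (\<lambda>C. if card C = s - 1 then 1 else 0) (B \<inter> ?K))"
        unfolding KR
      proof (rule sum.cong[OF refl])
        fix B assume "B \<in> Pow A"
        then have "B \<inter> (Q \<inter> A) = Q \<inter> B" by auto
        then show "wt p A B * ?ind Q B = wt p A B * (\<lambda>C. if card C = s - 1 then 1 else 0) (B \<inter> (Q \<inter> A))"
          by simp
      qed
      also have "\<dots> = (\<Sum>C\<in>Pow ?K. wt p ?K C * (if card C = s - 1 then 1 else 0))"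
        by (rule wt_split) (use fK in auto)
      also have "\<dots> = real s * p * (1 - p) ^ (s - 1)"
        by (rule wt_exact) (use fK Q s2 in auto)
      finally show ?thesis .
    qed
    have nonneg: "0 \<le> (\<Sum>B\<in>Pow A. wt p A B * ?ind Q B)" for Q
      using wt_nonneg[OF p01] by (intro sum_nonneg) auto
    have "(\<Sum>Q\<in>{Q \<in> ?fl. card (Q \<inter> A) = s}. \<Sum>B\<in>Pow A. wt p A B * ?ind Q B)
        \<le> (\<Sum>Q\<in>?fl. \<Sum>B\<in>Pow A. wt p A B * ?ind Q B)"
      by (rule sum_mono2[OF finite_flats]) (use nonneg in auto)
    moreover have "(\<Sum>Q\<in>{Q \<in> ?fl. card (Q \<inter> A) = s}. \<Sum>B\<in>Pow A. wt p A B * ?ind Q B)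
        = real ?X * (real s * p * (1 - p) ^ (s - 1))"
      using exact by simp
    ultimately have key: "real ?X * (real s * p * (1 - p) ^ (s - 1)) \<le> ?lam' * card ?fl"
      using ub swap by linarith
    have sp: "real s * p = 1" using s2 unfolding p_def by simp
    have q: "1 - p = (real s - 1) / real s" using s2 unfolding p_def by (simp add: field_simps)
    have qpos: "(real s - 1) / real s > 0" using s2 by simp
    define c where "c = ((real s - 1) / real s) ^ (s - 1)"
    have cpos: "c > 0" unfolding c_def using qpos by simp
    have "real ?X * c \<le> ?lam' * card ?fl" using key unfolding sp q c_def by simp
    then have "real ?X / card ?fl * c \<le> ?lam'" using flpos by (simp add: field_simps)
    then have "lam_n n d s * c \<le> ?lam'" using A(2) unfolding lam_A_def by simp
    then have "lam_n n d s \<le> ?lam' / c" using cpos by (simp add: field_simps)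
    also have "?lam' / c = (real s / (real s - 1)) ^ (s - 1) * ?lam'"
      unfolding c_def by (simp add: power_divide field_simps)
    finally show ?thesis .
  qed
qed

lemma lam_n_compl_le:
  assumes "s \<le> 2 ^ d"
  shows "lam_n n d s \<le> lam_n n d (2 ^ d - s)"
proof -
  obtain A where A: "A \<subseteq> F2vec n" "lam_n n d s = lam_A n d s A" using lam_n_obtain by blast
  let ?A' = "F2vec n - A"
  have "{Q \<in> flats n d. card (Q \<inter> A) = s} = {Q \<in> flats n d. card (Q \<inter> ?A') = 2 ^ d - s}"
  proof (rule Collect_cong, rule conj_cong[OF refl])
    fix Q assume Q: "Q \<in> flats n d"
    have QF: "Q \<subseteq> F2vec n" using flats_sub_F[OF Q] .
    have fQ: "finite Q" using finite_subset[OF QF finite_F2vec] .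
    have "Q \<inter> ?A' = Q - A" using QF by auto
    then have "card (Q \<inter> ?A') = card Q - card (Q \<inter> A)" using card_Diff_subset_Int[of Q A] fQ by simp
    moreover have "card Q = 2 ^ d" using card_flat[OF Q] .
    moreover have "card (Q \<inter> A) \<le> card Q" using fQ by (simp add: card_mono)
    ultimately show "card (Q \<inter> A) = s \<longleftrightarrow> card (Q \<inter> ?A') = 2 ^ d - s" using assms by auto
  qed
  then have "lam_A n d s A = lam_A n d (2 ^ d - s) ?A'" unfolding lam_A_def by simp
  also have "\<dots> \<le> lam_n n d (2 ^ d - s)" by (rule lam_n_ge) auto
  finally show ?thesis using A(2) by simp
qed

lemma lam_n_compl:
  assumes "s \<le> 2 ^ d"
  shows "lam_n n d s = lam_n n d (2 ^ d - s)"
proof (rule antisym)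
  show "lam_n n d s \<le> lam_n n d (2 ^ d - s)" by (rule lam_n_compl_le[OF assms])
  have e: "2 ^ d - (2 ^ d - s) = s" using assms by simp
  have "lam_n n d (2 ^ d - s) \<le> lam_n n d (2 ^ d - (2 ^ d - s))" by (rule lam_n_compl_le) simp
  then show "lam_n n d (2 ^ d - s) \<le> lam_n n d s" unfolding e .
qed

lemma lam_conv: "(\<lambda>n. lam_n n d s) \<longlonglongrightarrow> lam d s"
proof -
  have dec: "decseq (\<lambda>n. lam_n (n + d) d s)"
  proof (rule decseq_SucI)
    fix n
    have "lam_n (Suc (n + d)) d s \<le> lam_n (n + d) d s" by (rule lam_n_mono) simp
    then show "lam_n (Suc n + d) d s \<le> lam_n (n + d) d s" by simp
  qed
  have lb: "\<forall>i. 0 \<le> lam_n (i + d) d s" using lam_n_nonneg by blast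
  obtain L where L: "(\<lambda>n. lam_n (n + d) d s) \<longlonglongrightarrow> L"
    using decseq_convergent[OF dec lb] by metis
  then have "(\<lambda>n. lam_n n d s) \<longlonglongrightarrow> L" by (rule LIMSEQ_offset)
  moreover then have "lam d s = L" unfolding lam_def by (rule limI)
  ultimately show ?thesis by simp
qed

lemma lam_nonneg: "0 \<le> lam d s"
  using LIMSEQ_le_const[OF lam_conv] lam_n_nonneg by blast

lemma lam_sample:
  assumes "2 \<le> s"
  shows "lam d s \<le> (real s / (real s - 1)) ^ (s - 1) * lam d (s - 1)"
  using LIMSEQ_le[OF lam_conv tendsto_mult_left[OF lam_conv]] lam_n_sample[OF assms] by blast

lemma base_le_e:
  assumes "2 \<le> s"
  shows "(real s / (real s - 1)) ^ (s - 1) \<le> exp 1"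
proof -
  define m where "m = s - 1"
  have m: "m \<ge> 1" "real s = real m + 1" using assms unfolding m_def by auto
  have "real s / (real s - 1) = 1 + 1 / real m" using m by (simp add: field_simps)
  also have "\<dots> \<le> exp (1 / real m)" by (rule exp_ge_add_one_self)
  finally have "(real s / (real s - 1)) ^ m \<le> exp (1 / real m) ^ m"
    using m by (intro power_mono) (auto simp: field_simps)
  also have "\<dots> = exp (real m * (1 / real m))" by (rule exp_of_nat_mult[symmetric])
  also have "\<dots> = exp 1" using m by simp
  finally show ?thesis unfolding m_def .
qed

lemma lam_compl:
  assumes "s \<le> 2 ^ d"
  shows "lam d s = lam d (2 ^ d - s)"
proof -
  have "(\<lambda>n. lam_n n d s) = (\<lambda>n. lam_n n d (2 ^ d - s))" using lam_n_compl[OF assms] by simp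
  then show ?thesis unfolding lam_def by simp
qed

lemma part1:
  assumes "2 \<le> s"
  shows "lam d s \<le> (real s / (real s - 1)) ^ (s - 1) * lam d (s - 1) \<and>
         (real s / (real s - 1)) ^ (s - 1) * lam d (s - 1) \<le> exp 1 * lam d (s - 1)"
  using lam_sample[OF assms] mult_right_mono[OF base_le_e[OF assms] lam_nonneg] by simp

theorem theorem1p5:
  fixes d :: nat
  assumes "d > 1"
  shows "(\<forall>s::nat. 2 \<le> s \<and> s \<le> 2 ^ d \<longrightarrow>
            lam d s \<le> (real s / (real s - 1)) ^ (s - 1) * lam d (s - 1) \<and>
            (real s / (real s - 1)) ^ (s - 1) * lam d (s - 1) \<le> exp 1 * lam d (s - 1))
       \<and> (\<forall>s::nat. s \<le> 2 ^ d - 2 \<longrightarrow>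
            lam d s \<le> ((2 ^ d - real s) / (2 ^ d - real s - 1)) ^ (2 ^ d - s - 1) * lam d (s + 1) \<and>
            ((2 ^ d - real s) / (2 ^ d - real s - 1)) ^ (2 ^ d - s - 1) * lam d (s + 1)
              \<le> exp 1 * lam d (s + 1))"
proof (intro conjI allI impI)
  fix s :: nat assume "2 \<le> s \<and> s \<le> 2 ^ d"
  then have s2: "2 \<le> s" by simp
  show "lam d s \<le> (real s / (real s - 1)) ^ (s - 1) * lam d (s - 1)"
    using part1[OF s2] by simp
  show "(real s / (real s - 1)) ^ (s - 1) * lam d (s - 1) \<le> exp 1 * lam d (s - 1)"
    using part1[OF s2] by simp
next
  fix s :: nat assume s: "s \<le> 2 ^ d - 2"
  define t where "t = 2 ^ d - s"
  have "(2::nat) ^ 1 \<le> 2 ^ d" by (rule power_increasing) (use assms in auto)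
  then have pd: "(2::nat) \<le> 2 ^ d" by simp
  have t2: "2 \<le> t" using s pd unfolding t_def by linarith
  have sle: "s \<le> 2 ^ d" using s pd by linarith
  have rt: "real t = 2 ^ d - real s" unfolding t_def using sle by (simp add: of_nat_diff)
  have t1: "t - 1 = 2 ^ d - s - 1" unfolding t_def by simp
  have e1: "lam d s = lam d t" unfolding t_def by (rule lam_compl[OF sle])
  have "s + 1 \<le> 2 ^ d" using s pd by linarith
  then have e2: "lam d (s + 1) = lam d (t - 1)" using lam_compl[of "s + 1" d] unfolding t_def by simp
  have base: "real t / (real t - 1) = (2 ^ d - real s) / (2 ^ d - real s - 1)" using rt by simp
  note P = part1[OF t2]
  show "lam d s \<le> ((2 ^ d - real s) / (2 ^ d - real s - 1)) ^ (2 ^ d - s - 1) * lam d (s + 1)"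
    using P unfolding e1 e2 base t1 by simp
  show "((2 ^ d - real s) / (2 ^ d - real s - 1)) ^ (2 ^ d - s - 1) * lam d (s + 1) \<le> exp 1 * lam d (s + 1)"
    using P unfolding e1 e2 base t1 by simp
qed

end
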